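(* Let $t \geq 1$ and $k \geq 1$ be integers, and let $\mathcal{F}$ be a finite family of finite sets with $\alpha(\mathcal{F}) \geq t$. Let $\mathcal{A}_1, \dots, \mathcal{A}_k$ be cross-$t$-intersecting sub-families of $\mathcal{F}$ such that $\sum_{i=1}^k |\mathcal{A}_i|$ is maximum among all $k$-tuples of cross-$t$-intersecting sub-families of $\mathcal{F}$. Then: (i) $\sum_{i=1}^k |\mathcal{A}_i| = k\, l(\mathcal{F},t)$ if $k \geq \kappa(\mathcal{F},t)$; (ii) $\sum_{i=1}^k |\mathcal{A}_i| > k\, l(\mathcal{F},t)$ if $k < \kappa(\mathcal{F},t)$.
   Context: All sets and families are finite. A family $\mathcal{A}$ is $t$-intersecting if $|A \cap B| \geq t$ for all $A, B \in \mathcal{A}$ with $A \neq B$. Families $\mathcal{A}_1, \dots, \mathcal{A}_k$ (not necessarily distinct or non-empty) are cross-$t$-intersecting if for all $i \neq j$, $|A \cap B| \geq t$ for every $A \in \mathcal{A}_i$ and $B \in \mathcal{A}_j$. For non-empty $\mathcal{F}$: $\alpha(\mathcal{F}) = \max\{|F| : F \in \mathcal{F}\}$; $l(\mathcal{F},t)$ is the size of a largest $t$-intersecting sub-family of $\mathcal{F}$. For a family $\mathcal{A}$, $\mathcal{A}^{t,+} = \{A \in \mathcal{A} : |A \cap B| \geq t \text{ for all } B \in \mathcal{A}\setminus\{A\}\}$ and $\mathcal{A}^{t,-} = \mathcal{A} \setminus \mathcal{A}^{t,+}$. For $\mathcal{A} \subseteq \mathcal{F}$, $\beta(\mathcal{F},t,\mathcal{A})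 = \frac{l(\mathcal{F},t) - |\mathcal{A}^{t,+}|}{|\mathcal{A}^{t,-}|}$ if $\mathcal{A}^{t,-} \neq \emptyset$, and $\frac{l(\mathcal{F},t)}{|\mathcal{F}|}$ otherwise; $\beta(\mathcal{F},t) = \min_{\mathcal{A} \subseteq \mathcal{F}} \beta(\mathcal{F},t,\mathcal{A})$ and $\kappa(\mathcal{F},t) = 1/\beta(\mathcal{F},t)$. *)

theory Defs
  imports Complex_Main
begin

definition t_intersecting :: "nat \<Rightarrow> 'a set set \<Rightarrow> bool" where
  "t_intersecting t \<A> \<longleftrightarrow> (\<forall>A\<in>\<A>. \<forall>B\<in>\<A>. A \<noteq> B \<longrightarrow> t \<le> card (A \<inter> B))"

definition cross_t_intersecting :: "nat \<Rightarrow> nat \<Rightarrow> (nat \<Rightarrow> 'a set set) \<Rightarrow> bool" where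
  "cross_t_intersecting t k As \<longleftrightarrow>
     (\<forall>i\<in>{1..k}. \<forall>j\<in>{1..k}. i \<noteq> j \<longrightarrow> (\<forall>A\<in>As i. \<forall>B\<in>As j. t \<le> card (A \<inter> B)))"

definition alpha_fam :: "'a set set \<Rightarrow> nat" where
  "alpha_fam F = Max (card ` F)"

definition l_fam :: "'a set set \<Rightarrow> nat \<Rightarrow> nat" where
  "l_fam F t = Max (card ` {G. G \<subseteq> F \<and> t_intersecting t G})"

definition plus_part :: "nat \<Rightarrow> 'a set set \<Rightarrow> 'a set set" where
  "plus_part t \<A> = {A\<in>\<A>. \<forall>B\<in>\<A> - {A}. t \<le> card (A \<inter> B)}"

definition minus_part :: "nat \<Rightarrow> 'a set set \<Rightarrow> 'a set set" where
  "minus_part t \<A> = \<A> - plus_part t \<A>"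

definition beta_sub :: "'a set set \<Rightarrow> nat \<Rightarrow> 'a set set \<Rightarrow> real" where
  "beta_sub F t \<A> =
     (if minus_part t \<A> \<noteq> {}
      then (real (l_fam F t) - real (card (plus_part t \<A>))) / real (card (minus_part t \<A>))
      else real (l_fam F t) / real (card F))"

definition beta_fam :: "'a set set \<Rightarrow> nat \<Rightarrow> real" where
  "beta_fam F t = Min (beta_sub F t ` Pow F)"

definition kappa_fam :: "'a set set \<Rightarrow> nat \<Rightarrow> real" where
  "kappa_fam F t = 1 / beta_fam F t"

end

theory Submission
  imports Defs
begin

lemma plus_sub: "plus_part t A \<subseteq> A"
  unfolding plus_part_def by auto

lemma card_split: "finite A \<Longrightarrow> card A = card (plus_part t A) + card (minus_part t A)"
  unfolding minus_part_def using plus_sub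
  by (metis card_Diff_subset card_mono finite_subset le_add_diff_inverse)

lemma plus_tint: "t_intersecting t (plus_part t A)"
  unfolding t_intersecting_def plus_part_def by auto

lemma l_fin: "finite F \<Longrightarrow> finite (card ` {G. G \<subseteq> F \<and> t_intersecting t G})"
  by simp

lemma l_upper: "finite F \<Longrightarrow> G \<subseteq> F \<Longrightarrow> t_intersecting t G \<Longrightarrow> card G \<le> l_fam F t"
  unfolding l_fam_def by (rule Max_ge) auto

lemma l_attain: "finite F \<Longrightarrow> \<exists>L. L \<subseteq> F \<and> t_intersecting t L \<and> card L = l_fam F t"
proof -
  assume f: "finite F"
  have ne: "card ` {G. G \<subseteq> F \<and> t_intersecting t G} \<noteq> {}"
    by (auto simp: t_intersecting_def)
  have "l_fam F t \<in> card ` {G. G \<subseteq> F \<and> t_intersecting t G}"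
    unfolding l_fam_def using f ne by (intro Max_in) auto
  then show ?thesis by auto
qed

lemma l_pos: "finite F \<Longrightarrow> F \<noteq> {} \<Longrightarrow> 1 \<le> l_fam F t"
proof -
  assume f: "finite F" "F \<noteq> {}"
  then obtain X where "X \<in> F" by auto
  then have "card {X} \<le> l_fam F t" using f
    by (intro l_upper) (auto simp: t_intersecting_def)
  then show ?thesis by simp
qed

lemma plus_lt_l:
  assumes "finite F" "A \<subseteq> F" "minus_part t A \<noteq> {}"
  shows "card (plus_part t A) < l_fam F t"
proof -
  obtain X where X: "X \<in> A" "X \<notin> plus_part t A"
    using assms(3) unfolding minus_part_def by auto
  have ti: "t_intersecting t (insert X (plus_part t A))"
    unfolding t_intersecting_def
  proof (intro ballI impI)
    fix Y Z assume Y: "Y \<in> insert X (plus_part t A)" and Z: "Z \<in> insert X (plus_part t A)" and ne: "Y \<noteq> Z"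
    show "t \<le> card (Y \<inter> Z)"
    proof (cases "Y = X")
      case True
      then have "Z \<in> plus_part t A" using Z ne by auto
      then have "t \<le> card (Z \<inter> Y)" unfolding plus_part_def using True X ne by auto
      then show ?thesis by (simp add: Int_commute)
    next
      case False
      then have "Y \<in> plus_part t A" using Y by auto
      moreover have "Z \<in> A" using Z X plus_sub by auto
      ultimately show ?thesis unfolding plus_part_def using ne by auto
    qed
  qed
  have fin: "finite (plus_part t A)" using assms(1,2) plus_sub finite_subset by metis
  have "card (insert X (plus_part t A)) \<le> l_fam F t"
    using ti assms plus_sub X by (intro l_upper) auto
  then show ?thesis using X fin by simp
qed

lemma beta_sub_pos:
  assumes "finite F" "F \<noteq> {}" "A \<subseteq> F"
  shows "beta_sub F t A > 0"
proof (cases "minus_part t A \<noteq> {}")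
  case True
  have "card (plus_part t A) < l_fam F t" using plus_lt_l assms True by blast
  moreover have "card (minus_part t A) > 0"
    using True assms finite_subset unfolding minus_part_def by (metis Diff_subset card_gt_0_iff)
  ultimately show ?thesis using True unfolding beta_sub_def by simp
next
  case False
  have "1 \<le> l_fam F t" using l_pos assms by blast
  moreover have "card F > 0" using assms card_gt_0_iff by blast
  ultimately show ?thesis using False unfolding beta_sub_def by simp
qed

lemma beta_pos:
  assumes "finite F" "F \<noteq> {}"
  shows "beta_fam F t > 0"
  unfolding beta_fam_def using assms beta_sub_pos
  by (subst Min_gr_iff) auto

lemma beta_le: "finite F \<Longrightarrow> A \<subseteq> F \<Longrightarrow> beta_fam F t \<le> beta_sub F t A"
  unfolding beta_fam_def by (rule Min_le) auto

lemma beta_attain: "finite F \<Longrightarrow> \<exists>A. A \<subseteq> F \<and> beta_fam F t = beta_sub F t A"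
proof -
  assume f: "finite F"
  have "beta_fam F t \<in> beta_sub F t ` Pow F" unfolding beta_fam_def
    using f by (intro Min_in) auto
  then show ?thesis by auto
qed

lemma sum_const_tail:
  "k \<ge> 1 \<Longrightarrow> (\<Sum>i=1..k. card (if i = 1 then A else B)) = card A + (k - 1) * card B"
proof -
  assume "k \<ge> 1"
  then have "{1..k} = insert 1 {2..k}" by auto
  then have "(\<Sum>i=1..k. card (if i = 1 then A else B)) = card A + (\<Sum>i=2..k. card (if i = 1 then A else B))"
    by simp
  also have "(\<Sum>i=2..k. card (if i = 1 then A else B)) = (\<Sum>i=2..k. card B)"
    by (rule sum.cong) auto
  finally show ?thesis by simp
qed

lemma construction:
  assumes "k \<ge> 1" "A \<subseteq> F" "\<forall>X\<in>F. finite X" "finite F" "minus_part t A \<noteq> {}"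
  defines "Bs \<equiv> (\<lambda>i::nat. if i = 1 then A else plus_part t A)"
  shows "(\<forall>i\<in>{1..k}. Bs i \<subseteq> F) \<and> cross_t_intersecting t k Bs
    \<and> (\<Sum>i=1..k. card (Bs i)) = k * card (plus_part t A) + card (minus_part t A)"
proof (intro conjI)
  show "\<forall>i\<in>{1..k}. Bs i \<subseteq> F" using assms(2) plus_sub unfolding Bs_def by auto
  have key: "t \<le> card (X \<inter> Y)" if X: "X \<in> plus_part t A" and Y: "Y \<in> A" for X Y
  proof (cases "X = Y")
    case False
    then show ?thesis using X Y unfolding plus_part_def by auto
  next
    case True
    obtain Z where Z: "Z \<in> A" "Z \<notin> plus_part t A" using assms(5) unfolding minus_part_def by auto
    then have "Z \<noteq> X" using X by auto
    then have "t \<le> card (X \<inter> Z)" using X Z unfolding plus_part_def by auto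
    also have "\<dots> \<le> card X" using X plus_sub[of t A] assms(2,3) by (intro card_mono) blast+
    finally show ?thesis using True by simp
  qed
  show "cross_t_intersecting t k Bs"
    unfolding cross_t_intersecting_def
  proof (intro ballI impI)
    fix i j X Y assume i: "i \<in> {1..k}" and j: "j \<in> {1..k}" and ij: "i \<noteq> j" and X: "X \<in> Bs i" and Y: "Y \<in> Bs j"
    show "t \<le> card (X \<inter> Y)"
    proof (cases "i = 1")
      case True
      then have "j \<noteq> 1" using ij by auto
      then have "Y \<in> plus_part t A" "X \<in> A" using X Y True unfolding Bs_def by auto
      then show ?thesis using key by (metis Int_commute)
    next
      case False
      then have "X \<in> plus_part t A" using X unfolding Bs_def by auto
      moreover have "Y \<in> A" using Y plus_sub unfolding Bs_def by (auto split: if_splits)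
      ultimately show ?thesis using key by blast
    qed
  qed
  have finA: "finite A" using assms finite_subset by blast
  have "(\<Sum>i=1..k. card (Bs i)) = card A + (k - 1) * card (plus_part t A)"
    unfolding Bs_def using sum_const_tail assms(1) by blast
  also have "\<dots> = k * card (plus_part t A) + card (minus_part t A)"
    using card_split[OF finA, of t] assms(1)
    by (cases k) auto
  finally show "(\<Sum>i=1..k. card (Bs i)) = k * card (plus_part t A) + card (minus_part t A)" .
qed

lemma upper_bound:
  fixes As :: "nat \<Rightarrow> 'a set set"
  assumes fin: "finite F" and sub: "\<forall>i\<in>{1..k}. As i \<subseteq> F"
    and cr: "cross_t_intersecting t k As"
  defines "U \<equiv> (\<Union>i\<in>{1..k}. As i)"
  shows "(\<Sum>i=1..k. card (As i)) \<le> k * card (plus_part t U) + card (minus_part t U)"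
proof -
  have "U \<subseteq> F" using sub unfolding U_def by auto
  then have finU: "finite U" using fin finite_subset by blast
  have AsU: "As i \<subseteq> U" if "i \<in> {1..k}" for i unfolding U_def using that by auto
  define m where "m X = card {i\<in>{1..k}. X \<in> As i}" for X
  have "(\<Sum>i=1..k. card (As i)) = (\<Sum>i=1..k. \<Sum>X\<in>U. if X \<in> As i then 1 else 0)"
  proof (rule sum.cong)
    fix i assume i: "i \<in> {1..k}"
    have "(\<Sum>X\<in>U. if X \<in> As i then 1 else (0::nat)) = card (U \<inter> As i)"
      using finU by (simp add: sum.If_cases)
    also have "U \<inter> As i = As i" using AsU[OF i] by auto
    finally show "card (As i) = (\<Sum>X\<in>U. if X \<in> As i then 1 else 0)" by simp
  qed simp
  also have "\<dots> = (\<Sum>X\<in>U. \<Sum>i=1..k. if X \<in> As i then 1 else 0)"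
    by (rule sum.swap)
  also have "\<dots> = (\<Sum>X\<in>U. m X)"
    unfolding m_def by (rule sum.cong) (simp_all add: sum.If_cases Int_def)
  also have "\<dots> = (\<Sum>X\<in>plus_part t U. m X) + (\<Sum>X\<in>minus_part t U. m X)"
    unfolding minus_part_def using finU plus_sub
    by (metis sum.subset_diff add.commute)
  also have "\<dots> \<le> (\<Sum>X\<in>plus_part t U. k) + (\<Sum>X\<in>minus_part t U. 1)"
  proof (intro add_mono sum_mono)
    fix X
    have "card {i\<in>{1..k}. X \<in> As i} \<le> card {1..k}" by (intro card_mono) auto
    then show "m X \<le> k" unfolding m_def by simp
  next
    fix X assume X: "X \<in> minus_part t U"
    then obtain Y where Y: "Y \<in> U" "Y \<noteq> X" "\<not> t \<le> card (X \<inter> Y)"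
      unfolding minus_part_def plus_part_def by auto
    obtain j where j: "j \<in> {1..k}" "Y \<in> As j" using Y(1) unfolding U_def by blast
    have "\<forall>a\<in>{i\<in>{1..k}. X \<in> As i}. \<forall>b\<in>{i\<in>{1..k}. X \<in> As i}. a = b"
    proof (intro ballI)
      fix a b assume a: "a \<in> {i\<in>{1..k}. X \<in> As i}" and b: "b \<in> {i\<in>{1..k}. X \<in> As i}"
      have "a = j"
      proof (rule ccontr)
        assume "a \<noteq> j" then show False using cr a j Y unfolding cross_t_intersecting_def by auto
      qed
      moreover have "b = j"
      proof (rule ccontr)
        assume "b \<noteq> j" then show False using cr b j Y unfolding cross_t_intersecting_def by auto
      qed
      ultimately show "a = b" by simp
    qed
    then show "m X \<le> 1" unfolding m_def using card_le_Suc0_iff_eq[of "{i\<in>{1..k}. X \<in> As i}"] by simp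
  qed
  also have "\<dots> = k * card (plus_part t U) + card (minus_part t U)" by simp
  finally show ?thesis .
qed

lemma lower_kl:
  assumes "finite F" "\<forall>X\<in>F. finite X" "F \<noteq> {}" "alpha_fam F \<ge> t"
  shows "\<exists>L. L \<subseteq> F \<and> card L = l_fam F t \<and> (\<forall>X\<in>L. \<forall>Y\<in>L. t \<le> card (X \<inter> Y))"
proof (cases "l_fam F t \<ge> 2")
  case True
  obtain L where L: "L \<subseteq> F" "t_intersecting t L" "card L = l_fam F t" using l_attain assms(1) by blast
  have "\<forall>X\<in>L. \<forall>Y\<in>L. t \<le> card (X \<inter> Y)"
  proof (intro ballI)
    fix X Y assume X: "X \<in> L" and Y: "Y \<in> L"
    show "t \<le> card (X \<inter> Y)"
    proof (cases "X = Y")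
      case False then show ?thesis using L X Y unfolding t_intersecting_def by auto
    next
      case True
      have "\<exists>Z\<in>L. Z \<noteq> X"
      proof (rule ccontr)
        assume "\<not> ?thesis" then have "L \<subseteq> {X}" by auto
        then have "card L \<le> card {X}" by (intro card_mono) auto
        then have "card L \<le> 1" by simp
        then show False using L True \<open>2 \<le> l_fam F t\<close> by simp
      qed
      then obtain Z where Z: "Z \<in> L" "Z \<noteq> X" by auto
      then have "t \<le> card (X \<inter> Z)" using L X unfolding t_intersecting_def by auto
      also have "\<dots> \<le> card X" using X L assms(2) by (intro card_mono) auto
      finally show ?thesis using True by simp
    qed
  qed
  then show ?thesis using L by blast
next
  case False
  then have l1: "l_fam F t = 1" using l_pos[OF assms(1,3), of t] by simp
  have "alpha_fam F \<in> card ` F" unfolding alpha_fam_def using assms by (intro Max_in) auto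
  then obtain X where X: "X \<in> F" "card X = alpha_fam F" by auto
  then show ?thesis using l1 assms(4) by (intro exI[of _ "{X}"]) auto
qed

theorem theorem1p2:
  fixes F :: "'a set set" and t k :: nat and As :: "nat \<Rightarrow> 'a set set"
  assumes "t \<ge> 1" and "k \<ge> 1"
    and "finite F" and "\<forall>X\<in>F. finite X" and "F \<noteq> {}"
    and "alpha_fam F \<ge> t"
    and "\<forall>i\<in>{1..k}. As i \<subseteq> F"
    and "cross_t_intersecting t k As"
    and "\<forall>Bs. (\<forall>i\<in>{1..k}. Bs i \<subseteq> F) \<and> cross_t_intersecting t k Bs
           \<longrightarrow> (\<Sum>i=1..k. card (Bs i)) \<le> (\<Sum>i=1..k. card (As i))"
  shows "(real k \<ge> kappa_fam F t \<longrightarrow> (\<Sum>i=1..k. card (As i)) = k * l_fam F t)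
       \<and> (real k < kappa_fam F t \<longrightarrow> (\<Sum>i=1..k. card (As i)) > k * l_fam F t)"
proof -
  define M where "M = (\<Sum>i=1..k. card (As i))"
  define l where "l = l_fam F t"
  have bpos: "beta_fam F t > 0" using beta_pos assms(3,5) by blast
  have Mkl: "k * l \<le> M"
  proof -
    obtain L where L: "L \<subseteq> F" "card L = l" "\<forall>X\<in>L. \<forall>Y\<in>L. t \<le> card (X \<inter> Y)"
      using lower_kl[OF assms(3,4,5,6)] unfolding l_def by blast
    have "(\<forall>i\<in>{1..k}. (\<lambda>_. L) i \<subseteq> F) \<and> cross_t_intersecting t k (\<lambda>_. L)"
      using L unfolding cross_t_intersecting_def by auto
    then have "(\<Sum>i=1..k. card ((\<lambda>_. L) i)) \<le> M" using assms(9)[rule_format, of "\<lambda>_. L"] unfolding M_def by simp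
    then show ?thesis using L by simp
  qed
  have constr: "k * card (plus_part t A) + card (minus_part t A) \<le> M"
    if "A \<subseteq> F" "minus_part t A \<noteq> {}" for A
  proof -
    define Bs where "Bs = (\<lambda>i::nat. if i = 1 then A else plus_part t A)"
    have c: "(\<forall>i\<in>{1..k}. Bs i \<subseteq> F) \<and> cross_t_intersecting t k Bs
      \<and> (\<Sum>i=1..k. card (Bs i)) = k * card (plus_part t A) + card (minus_part t A)"
      unfolding Bs_def by (rule construction[OF assms(2) that(1) assms(4,3) that(2)])
    then have "(\<Sum>i=1..k. card (Bs i)) \<le> M" using assms(9)[rule_format, of Bs] unfolding M_def by blast
    then show ?thesis using c by simp
  qed
  have part1: "M = k * l" if kk: "real k \<ge> kappa_fam F t"
  proof -
    define U where "U = (\<Union>i\<in>{1..k}. As i)"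
    have UF: "U \<subseteq> F" using assms(7) unfolding U_def by auto
    have ub: "M \<le> k * card (plus_part t U) + card (minus_part t U)"
      using upper_bound[OF assms(3,7,8)] unfolding M_def U_def by blast
    have "1 \<le> real k * beta_fam F t" using kk bpos unfolding kappa_fam_def
      by (simp add: field_simps)
    also have "\<dots> \<le> real k * beta_sub F t U" using beta_le[OF assms(3) UF] by (simp add: mult_left_mono)
    finally have kb: "1 \<le> real k * beta_sub F t U" .
    have "M \<le> k * l"
    proof (cases "minus_part t U = {}")
      case True
      have finU: "finite U" using UF assms(3) finite_subset by blast
      have "plus_part t U = U" using True plus_sub unfolding minus_part_def by blast
      then have "card (plus_part t U) \<le> l" unfolding l_def
        using plus_tint[of t U] UF l_upper[OF assms(3), of U t] by simp
      then have "k * card (plus_part t U) \<le> k * l" by (rule mult_left_mono) simp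
      moreover have "M \<le> k * card (plus_part t U)" using ub True by simp
      ultimately show ?thesis by linarith
    next
      case False
      have cp: "card (minus_part t U) > 0"
        using False UF assms(3) finite_subset unfolding minus_part_def by (metis Diff_subset card_gt_0_iff)
      have "1 \<le> real k * ((real l - real (card (plus_part t U))) / real (card (minus_part t U)))"
        using kb False unfolding beta_sub_def l_def by simp
      then have "real (card (minus_part t U)) \<le> real k * (real l - real (card (plus_part t U)))"
        using cp by (simp add: field_simps)
      moreover have "real M \<le> real k * real (card (plus_part t U)) + real (card (minus_part t U))"
        using ub by (simp only: of_nat_add [symmetric] of_nat_mult [symmetric] of_nat_le_iff)
      ultimately have "real M \<le> real (k * l)" by (simp add: algebra_simps)
      then show ?thesis by linarith
    qed
    then show ?thesis using Mkl by simp
  qed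
  have part2: "M > k * l" if kk: "real k < kappa_fam F t"
  proof -
    have kb: "real k * beta_fam F t < 1" using kk bpos unfolding kappa_fam_def
      by (simp add: field_simps)
    obtain A where A: "A \<subseteq> F" "beta_fam F t = beta_sub F t A" using beta_attain[OF assms(3)] by blast
    show ?thesis
    proof (cases "minus_part t A = {}")
      case False
      have cp: "card (minus_part t A) > 0"
        using False A assms(3) finite_subset unfolding minus_part_def by (metis Diff_subset card_gt_0_iff)
      have "real k * ((real l - real (card (plus_part t A))) / real (card (minus_part t A))) < 1"
        using kb False A unfolding beta_sub_def l_def by simp
      then have "real k * (real l - real (card (plus_part t A))) < real (card (minus_part t A))"
        using cp by (simp add: field_simps)
      then have "real (k * l) < real (k * card (plus_part t A) + card (minus_part t A))"
        by (simp add: algebra_simps)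
      then have "k * l < k * card (plus_part t A) + card (minus_part t A)" by linarith
      then show ?thesis using constr[OF A(1) False] by simp
    next
      case True
      have cF: "card F > 0" using assms(3,5) card_gt_0_iff by blast
      have "real k * (real l / real (card F)) < 1" using kb True A unfolding beta_sub_def l_def by simp
      then have "real k * real l < real (card F)" using cF by (simp add: field_simps)
      then have "real (k * l) < real (card F)" by simp
      then have klF: "k * l < card F" by (simp only: of_nat_less_iff)
      have Fm: "minus_part t F \<noteq> {}"
      proof
        assume "minus_part t F = {}"
        then have "plus_part t F = F" using plus_sub unfolding minus_part_def by blast
        then have "card F \<le> l" unfolding l_def using plus_tint[of t F] l_upper[OF assms(3), of F t] by simp
        moreover have "l \<le> k * l" using assms(2) by simp
        ultimately show False using klF by linarith
      qed
      have "card F = card (plus_part t F) + card (minus_part t F)" using card_split assms(3) by blast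
      also have "\<dots> \<le> k * card (plus_part t F) + card (minus_part t F)" using assms(2) by simp
      also have "\<dots> \<le> M" using constr[OF order_refl Fm] .
      finally show ?thesis using klF by simp
    qed
  qed
  show ?thesis using part1 part2 unfolding M_def l_def by blast
qed

end
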